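(* For every fixed $m\ge4$ and $k\ge3$ (with $k<m$) there exists $\vec p\in(0,1)^m$ such that for every sufficiently large $n$, $$\Pr_{P\sim(\pi_{\vec p})^n}\big(|(\mathrm{JR}\subseteq_?\mathrm{CORE})(P)|=0\big)=1-\exp(-\Omega(n))\quad\text{and}\quad\Pr_{P\sim(\pi_{\vec p})^n}\big(|(\mathrm{JR}=_?\mathrm{CORE})(P)|=0\big)=1-\exp(-\Omega(n)).$$
   Context: $\mathcal A=[m]$, $\mathcal A_k$ the $k$-subsets. Approval profile $P=(A_1,\dots,A_n)$, ballots i.i.d. from $\pi_{\vec p}$ with $\Pr(A)=\prod_{i\in A}p_i\prod_{i\notin A}(1-p_i)$. $\mathrm{JR}(P)$ is the set of $W\in\mathcal A_k$ such that for every set of voters $N'\subseteq[n]$ with $|N'|\ge n/k$ and $\bigcap_{j\in N'}A_j\ne\emptyset$ there is $j\in N'$ with $A_j\cap W\ne\emptyset$. $\mathrm{CORE}(P)$ is the set of $W\in\mathcal A_k$ such that for every nonempty $N'\subseteq[n]$ and $W'\subseteq\mathcal A$ with $|W'|/k\le|N'|/n$ some $j\in N'$ has $|A_j\cap W'|\le|A_j\cap W|$. For set-valued mappings: $(f_1\subseteq_?f_2)(P)=f_1(P)$ if $f_1(P)\subseteq f_2(P)$ and $\emptyset$ otherwise; $(f_1=_?f_2)(P)=f_1(P)$ if $f_1(P)=f_2(P)$ and $\emptyset$ otherwise. *)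

theory Defs
  imports Complex_Main "HOL-Library.FuncSet"
begin

(* Alternatives are {0..<m}; voters are {0..<n}; a profile is P :: nat => nat set,
   P j = approval ballot of voter j. *)

definition alts :: "nat \<Rightarrow> nat set" where
  "alts m = {0..<m}"

definition committees :: "nat \<Rightarrow> nat \<Rightarrow> nat set set" where
  "committees m k = {W. W \<subseteq> alts m \<and> card W = k}"

definition ballot_prob :: "nat \<Rightarrow> (nat \<Rightarrow> real) \<Rightarrow> nat set \<Rightarrow> real" where
  "ballot_prob m p A = (\<Prod>i\<in>A. p i) * (\<Prod>i\<in>alts m - A. 1 - p i)"

definition profiles :: "nat \<Rightarrow> nat \<Rightarrow> (nat \<Rightarrow> nat set) set" where
  "profiles m n = PiE {0..<n} (\<lambda>_. Pow (alts m))"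

definition prof_prob :: "nat \<Rightarrow> (nat \<Rightarrow> real) \<Rightarrow> nat \<Rightarrow> ((nat \<Rightarrow> nat set) \<Rightarrow> bool) \<Rightarrow> real" where
  "prof_prob m p n E = (\<Sum>P\<in>{P\<in>profiles m n. E P}. \<Prod>j<n. ballot_prob m p (P j))"

definition JR :: "nat \<Rightarrow> nat \<Rightarrow> nat \<Rightarrow> (nat \<Rightarrow> nat set) \<Rightarrow> nat set set" where
  "JR m n k P = {W \<in> committees m k.
     \<forall>N' \<subseteq> {0..<n}. real (card N') \<ge> real n / real k \<and> (\<Inter>j\<in>N'. P j) \<noteq> {}
        \<longrightarrow> (\<exists>j\<in>N'. P j \<inter> W \<noteq> {})}"

definition CORE :: "nat \<Rightarrow> nat \<Rightarrow> nat \<Rightarrow> (nat \<Rightarrow> nat set) \<Rightarrow> nat set set" where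
  "CORE m n k P = {W \<in> committees m k.
     \<forall>N' \<subseteq> {0..<n}. \<forall>W' \<subseteq> alts m.
        N' \<noteq> {} \<and> real (card W') / real k \<le> real (card N') / real n
        \<longrightarrow> (\<exists>j\<in>N'. card (P j \<inter> W') \<le> card (P j \<inter> W))}"

definition subset_test :: "('p \<Rightarrow> 'a set) \<Rightarrow> ('p \<Rightarrow> 'a set) \<Rightarrow> 'p \<Rightarrow> 'a set" where
  "subset_test f1 f2 P = (if f1 P \<subseteq> f2 P then f1 P else {})"

definition eq_test :: "('p \<Rightarrow> 'a set) \<Rightarrow> ('p \<Rightarrow> 'a set) \<Rightarrow> 'p \<Rightarrow> 'a set" where
  "eq_test f1 f2 P = (if f1 P = f2 P then f1 P else {})"

end

theory Submission
  imports Defs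
begin

lemma sum_prod_profiles:
  fixes h :: "nat set \<Rightarrow> real"
  shows "(\<Sum>P\<in>profiles m n. \<Prod>j<n. h (P j)) = (\<Sum>A\<in>Pow (alts m). h A) ^ n"
proof -
  have "(\<Sum>A\<in>Pow (alts m). h A) ^ n = (\<Prod>j\<in>{0..<n}. \<Sum>A\<in>Pow (alts m). h A)" by simp
  also have "\<dots> = (\<Sum>P\<in>PiE {0..<n} (\<lambda>_. Pow (alts m)). \<Prod>j\<in>{0..<n}. h (P j))"
    by (rule prod_sum_PiE) (auto simp: alts_def)
  finally show ?thesis by (simp add: profiles_def atLeast0LessThan)
qed

lemma ballot_sum_cond:
  fixes p :: "nat \<Rightarrow> real"
  assumes "I \<subseteq> alts m" "Q \<subseteq> alts m" "I \<inter> Q = {}"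
  shows "(\<Sum>A\<in>Pow (alts m). ballot_prob m p A * (if I \<subseteq> A \<and> A \<inter> Q = {} then 1 else 0))
     = (\<Prod>i\<in>alts m. (if i \<in> I then p i else if i \<in> Q then 1 - p i else 1))"
proof -
  define f1 where "f1 i = (if i \<in> Q then 0 else p i)" for i
  define f2 where "f2 i = (if i \<in> I then 0 else 1 - p i)" for i
  have fin: "finite (alts m)" by (simp add: alts_def)
  have "(\<Prod>i\<in>alts m. (if i \<in> I then p i else if i \<in> Q then 1 - p i else 1))
      = (\<Prod>i\<in>alts m. f1 i + f2 i)"
    by (rule prod.cong) (use assms in \<open>auto simp: f1_def f2_def\<close>)
  also have "\<dots> = (\<Sum>X\<in>Pow (alts m). (\<Prod>x\<in>X. f1 x) * (\<Prod>x\<in>alts m - X. f2 x))"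
    by (rule prod_add[OF fin])
  also have "\<dots> = (\<Sum>A\<in>Pow (alts m). ballot_prob m p A * (if I \<subseteq> A \<and> A \<inter> Q = {} then 1 else 0))"
  proof (rule sum.cong)
    fix A assume A: "A \<in> Pow (alts m)"
    have finA: "finite A" using A fin finite_subset by auto
    show "(\<Prod>x\<in>A. f1 x) * (\<Prod>x\<in>alts m - A. f2 x) =
          ballot_prob m p A * (if I \<subseteq> A \<and> A \<inter> Q = {} then 1 else 0)"
    proof (cases "I \<subseteq> A \<and> A \<inter> Q = {}")
      case True
      have "(\<Prod>x\<in>A. f1 x) = (\<Prod>x\<in>A. p x)"
        by (rule prod.cong) (use True in \<open>auto simp: f1_def\<close>)
      moreover have "(\<Prod>x\<in>alts m - A. f2 x) = (\<Prod>x\<in>alts m - A. 1 - p x)"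
        by (rule prod.cong) (use True in \<open>auto simp: f2_def\<close>)
      ultimately show ?thesis using True by (simp add: ballot_prob_def)
    next
      case False
      have c0: "(if I \<subseteq> A \<and> A \<inter> Q = {} then 1 else 0) = (0::real)" using False by simp
      from False consider i where "i \<in> I" "i \<notin> A" | i where "i \<in> A" "i \<in> Q" by blast
      then show ?thesis
      proof cases
        case 1
        then have "i \<in> alts m - A" using assms by auto
        then have "(\<Prod>x\<in>alts m - A. f2 x) = 0"
          using fin 1 by (auto simp: f2_def prod_zero_iff intro!: bexI[of _ i])
        then show ?thesis by (simp only: c0 mult_zero_right mult_zero_left)
      next
        case 2
        then have "(\<Prod>x\<in>A. f1 x) = 0"
          using finA by (auto simp: f1_def prod_zero_iff intro!: bexI[of _ i])
        then show ?thesis by (simp only: c0 mult_zero_right mult_zero_left)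
      qed
    qed
  qed simp
  finally show ?thesis by simp
qed

lemma ballot_sum_one:
  fixes p :: "nat \<Rightarrow> real"
  shows "(\<Sum>A\<in>Pow (alts m). ballot_prob m p A) = 1"
  using ballot_sum_cond[of "{}" m "{}" p] by simp



definition eps :: "nat \<Rightarrow> real" where "eps k = 1 / 4 ^ (k+1)"
definition pp :: "nat \<Rightarrow> nat \<Rightarrow> real" where "pp k i = (if i < 2 then 1 - eps k else eps k)"
definition good :: "nat \<Rightarrow> nat set \<Rightarrow> bool" where "good k A = ({0,1} \<subseteq> A \<and> A \<inter> {2..k} = {})"
definition Zc :: "nat \<Rightarrow> nat \<Rightarrow> (nat \<Rightarrow> nat set) \<Rightarrow> nat" where
  "Zc k n P = card {j\<in>{..<n}. \<not> good k (P j)}"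

lemma eps_pos: "0 < eps k" "eps k < 1/2"
proof -
  show "0 < eps k" by (simp add: eps_def)
  have h1: "(1::real) \<le> 4 ^ k" by (simp add: one_le_power)
  have h2: "(4::real) ^ (k+1) = 4 * 4 ^ k" by simp
  have h: "(2::real) < 4 ^ (k+1)" using h1 h2 by linarith
  have "eps k = 1 / 4 ^ (k+1)" by (simp add: eps_def)
  also have "\<dots> < 1 / 2" using h by (intro divide_strict_left_mono) auto
  finally show "eps k < 1/2" .
qed

lemma pp_bounds: "0 < pp k i" "pp k i < 1"
  using eps_pos[of k] by (auto simp: pp_def)

lemma good_prob:
  assumes "k < m" "1 \<le> k"
  shows "(\<Sum>A\<in>Pow (alts m). ballot_prob m (pp k) A * (if good k A then 1 else 0)) = (1 - eps k) ^ (k+1)"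
proof -
  have k1: "1 \<le> k \<or> True" by simp
  have "(\<Sum>A\<in>Pow (alts m). ballot_prob m (pp k) A * (if good k A then 1 else 0))
     = (\<Sum>A\<in>Pow (alts m). ballot_prob m (pp k) A * (if {0,1} \<subseteq> A \<and> A \<inter> {2..k} = {} then 1 else 0))"
    by (simp add: good_def)
  also have "\<dots> = (\<Prod>i\<in>alts m. (if i \<in> {0,1} then pp k i else if i \<in> {2..k} then 1 - pp k i else 1))"
    by (rule ballot_sum_cond) (use assms in \<open>auto simp: alts_def\<close>)
  also have "\<dots> = (\<Prod>i\<in>alts m. (if i \<in> {0..k} then 1 - eps k else 1))"
    by (rule prod.cong) (use assms in \<open>auto simp: pp_def\<close>)
  also have "\<dots> = (\<Prod>i\<in>{0..k}. (if i \<in> {0..k} then 1 - eps k else 1))"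
    by (rule prod.mono_neutral_right) (use assms in \<open>auto simp: alts_def\<close>)
  also have "\<dots> = (1 - eps k) ^ (k+1)" by simp
  finally show ?thesis .
qed

lemma det:
  assumes k: "3 \<le> k" "k < m" and P: "P \<in> profiles m n" and Z: "k * Zc k n P < n"
  shows "{1..k} \<in> JR m n k P" "{1..k} \<notin> CORE m n k P"
proof -
  define B where "B = {j\<in>{..<n}. \<not> good k (P j)}"
  define G where "G = {j\<in>{0..<n}. good k (P j)}"
  have ZB: "Zc k n P = card B" by (simp add: Zc_def B_def)
  have com: "{1..k} \<in> committees m k" using k by (auto simp: committees_def alts_def)
  show "{1..k} \<in> JR m n k P"
    unfolding JR_def
  proof (intro CollectI conjI com allI impI)
    fix N' assume N': "N' \<subseteq> {0..<n}" "real n / real k \<le> real (card N') \<and> (\<Inter>j\<in>N'. P j) \<noteq> {}"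
    show "\<exists>j\<in>N'. P j \<inter> {1..k} \<noteq> {}"
    proof (rule ccontr)
      assume nt: "\<not> (\<exists>j\<in>N'. P j \<inter> {1..k} \<noteq> {})"
      have "N' \<subseteq> B"
      proof
        fix j assume j: "j \<in> N'"
        then have "P j \<inter> {1..k} = {}" using nt by blast
        moreover have "1 \<in> {1..k}" using k by simp
        ultimately have "1 \<notin> P j" by blast
        then show "j \<in> B" using j N'(1) by (auto simp: B_def good_def)
      qed
      then have "card N' \<le> card B" by (intro card_mono) (auto simp: B_def)
      moreover have "real n \<le> real k * real (card N')" using N'(2) k by (simp add: divide_simps mult.commute)
      then have "n \<le> k * card N'" by (metis of_nat_le_iff of_nat_mult)
      ultimately show False using Z ZB by (metis le_trans mult_le_mono2 not_le)
    qed
  qed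
  have disj: "G \<inter> B = {}" and un: "G \<union> B = {0..<n}" by (auto simp: G_def B_def)
  have "card G + card B = n"
    using card_Un_disjoint[of G B] disj un by (simp add: G_def B_def)
  then have cG: "k * card G + k * card B = k * n" by (metis add_mult_distrib2)
  have "3 * n \<le> k * n" using k by simp
  moreover have "k * card B < n" using Z ZB by simp
  ultimately have two: "2 * n < k * card G" using cG by linarith
  then have Gne: "G \<noteq> {}" by auto
  have npos: "0 < n" using Z by simp
  have ratio: "real (card {0::nat,1}) / real k \<le> real (card G) / real n"
  proof -
    have "2 * real n \<le> real k * real (card G)" using two
      by (metis less_imp_le of_nat_le_iff of_nat_mult of_nat_numeral)
    then show ?thesis using npos k by (simp add: divide_simps mult.commute)
  qed
  show "{1..k} \<notin> CORE m n k P"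
  proof
    assume "{1..k} \<in> CORE m n k P"
    then have all: "\<forall>N' \<subseteq> {0..<n}. \<forall>W' \<subseteq> alts m.
        N' \<noteq> {} \<and> real (card W') / real k \<le> real (card N') / real n
        \<longrightarrow> (\<exists>j\<in>N'. card (P j \<inter> W') \<le> card (P j \<inter> {1..k}))"
      unfolding CORE_def by blast
    have "G \<subseteq> {0..<n}" by (auto simp: G_def)
    moreover have "{0,1} \<subseteq> alts m" using k by (auto simp: alts_def)
    ultimately have "\<exists>j\<in>G. card (P j \<inter> {0,1}) \<le> card (P j \<inter> {1..k})"
      using all Gne ratio by blast
    then obtain j where j: "j \<in> G" "card (P j \<inter> {0,1}) \<le> card (P j \<inter> {1..k})" by blast
    have g: "good k (P j)" using j by (simp add: G_def)
    then have "P j \<inter> {0,1} = {0,1}" by (auto simp: good_def)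
    moreover have "P j \<inter> {1..k} = {1}" using g k by (auto simp: good_def)
    ultimately show False using j by simp
  qed
qed



definition hh :: "nat \<Rightarrow> nat set \<Rightarrow> real" where
  "hh k A = (if good k A then 1 else 2 ^ k)"

lemma prod_hh: "(\<Prod>j<n. hh k (P j)) = (2 ^ k) ^ Zc k n P"
proof -
  have "(\<Prod>j<n. hh k (P j)) = (\<Prod>j<n. if \<not> good k (P j) then 2 ^ k else 1)"
    by (rule prod.cong) (auto simp: hh_def)
  also have "\<dots> = (\<Prod>j\<in>{..<n} \<inter> {j. \<not> good k (P j)}. 2 ^ k) * (\<Prod>j\<in>{..<n} \<inter> - {j. \<not> good k (P j)}. 1)"
    by (rule prod.If_cases) simp
  also have "\<dots> = (2 ^ k) ^ card ({..<n} \<inter> {j. \<not> good k (P j)})" by simp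
  also have "{..<n} \<inter> {j. \<not> good k (P j)} = {j\<in>{..<n}. \<not> good k (P j)}" by auto
  finally show ?thesis by (simp add: Zc_def)
qed

lemma ballot_nonneg: "0 \<le> ballot_prob m (pp k) A"
  unfolding ballot_prob_def using pp_bounds[of k]
  by (intro mult_nonneg_nonneg prod_nonneg) (auto simp: less_imp_le)

lemma weight_nonneg: "0 \<le> (\<Prod>j<n. ballot_prob m (pp k) (P j))"
  by (intro prod_nonneg) (simp add: ballot_nonneg)

lemma finite_profiles: "finite (profiles m n)"
  by (simp add: profiles_def alts_def finite_PiE)

lemma total_one: "(\<Sum>P\<in>profiles m n. \<Prod>j<n. ballot_prob m p (P j)) = 1"
  by (simp add: sum_prod_profiles ballot_sum_one)

lemma key_sum:
  assumes "k < m" "1 \<le> k"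
  shows "(\<Sum>A\<in>Pow (alts m). ballot_prob m (pp k) A * hh k A) \<le> 3/2"
proof -
  let ?w = "ballot_prob m (pp k)"
  let ?g = "\<lambda>A. if good k A then 1 else 0 :: real"
  have "(\<Sum>A\<in>Pow (alts m). ?w A * hh k A) = (\<Sum>A\<in>Pow (alts m). 2^k * ?w A - (2^k - 1) * (?w A * ?g A))"
    by (rule sum.cong) (auto simp: hh_def algebra_simps)
  also have "\<dots> = 2^k * (\<Sum>A\<in>Pow (alts m). ?w A) - (2^k - 1) * (\<Sum>A\<in>Pow (alts m). ?w A * ?g A)"
    by (simp add: sum_subtractf sum_distrib_left)
  also have "\<dots> = 2^k - (2^k - 1) * (1 - eps k) ^ (k+1)"
    using good_prob[OF assms] by (simp add: ballot_sum_one)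
  finally have eq: "(\<Sum>A\<in>Pow (alts m). ?w A * hh k A) = 2^k - (2^k - 1) * (1 - eps k) ^ (k+1)" .
  have bern: "1 - real (k+1) * eps k \<le> (1 - eps k) ^ (k+1)"
    using Bernoulli_inequality[of "- eps k" "k+1"] eps_pos[of k] by simp
  have pk: "(1::real) \<le> 2^k" by (simp add: one_le_power)
  have "2^k - (2^k - 1) * (1 - eps k) ^ (k+1) \<le> 2^k - (2^k - 1) * (1 - real (k+1) * eps k)"
    using bern pk by (intro diff_left_mono mult_left_mono) auto
  also have "\<dots> = 1 + (2^k - 1) * (real (k+1) * eps k)" by (simp add: algebra_simps)
  also have "\<dots> \<le> 1 + 2^k * (real (k+1) * eps k)"
    using eps_pos[of k] by (simp add: mult_right_mono)
  also have "2^k * (real (k+1) * eps k) \<le> 1/2"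
  proof -
    have nat: "k + 1 < 2 ^ (k+1)" by (rule less_exp)
    then have "real (k+1) \<le> 2 ^ (k+1)" by (metis less_imp_le of_nat_le_iff of_nat_numeral of_nat_power)
    have "(4::real) ^ (k+1) = 2^(k+1) * 2^(k+1)"
      by (metis power_mult_distrib mult_2 numeral_Bit0 numeral_times_numeral num_double semiring_norm(12) power2_eq_square power_mult power_even_eq)
    then have "2^k * (real (k+1) * eps k) = (real (k+1)) / (2 * 2^(k+1))"
      by (simp add: eps_def field_simps)
    also have "\<dots> \<le> 2^(k+1) / (2 * 2^(k+1))"
      using \<open>real (k+1) \<le> 2 ^ (k+1)\<close> by (intro divide_right_mono) auto
    also have "\<dots> = 1/2" by simp
    finally show ?thesis .
  qed
  finally show ?thesis using eq by simp
qed

lemma tail: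
  assumes "k < m" "1 \<le> k"
  shows "prof_prob m (pp k) n (\<lambda>P. n \<le> k * Zc k n P) \<le> (3/4) ^ n"
proof -
  let ?w = "\<lambda>P. \<Prod>j<n. ballot_prob m (pp k) (P j)"
  let ?f = "\<lambda>P. ((2::real) ^ k) ^ Zc k n P / 2 ^ n"
  have "prof_prob m (pp k) n (\<lambda>P. n \<le> k * Zc k n P) = (\<Sum>P\<in>{P\<in>profiles m n. n \<le> k * Zc k n P}. ?w P)"
    by (simp add: prof_prob_def)
  also have "\<dots> \<le> (\<Sum>P\<in>{P\<in>profiles m n. n \<le> k * Zc k n P}. ?w P * ?f P)"
  proof (rule sum_mono)
    fix P assume "P \<in> {P\<in>profiles m n. n \<le> k * Zc k n P}"
    then have le: "n \<le> k * Zc k n P" by simp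
    have "(2::real) ^ n \<le> 2 ^ (k * Zc k n P)" using le by (intro power_increasing) auto
    then have "1 \<le> ?f P" by (simp add: power_mult)
    then show "?w P \<le> ?w P * ?f P" using weight_nonneg[where n=n and m=m and k=k and P=P]
      by (metis mult_left_mono mult.right_neutral)
  qed
  also have "\<dots> \<le> (\<Sum>P\<in>profiles m n. ?w P * ?f P)"
    by (rule sum_mono2) (auto simp: finite_profiles weight_nonneg)
  also have "\<dots> = (\<Sum>P\<in>profiles m n. \<Prod>j<n. ballot_prob m (pp k) (P j) * hh k (P j)) / 2 ^ n"
    by (simp add: sum_divide_distrib prod.distrib prod_hh)
  also have "\<dots> = (\<Sum>A\<in>Pow (alts m). ballot_prob m (pp k) A * hh k A) ^ n / 2 ^ n"
    using sum_prod_profiles[of "\<lambda>A. ballot_prob m (pp k) A * hh k A" n m] by simp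
  also have "\<dots> \<le> (3/2) ^ n / 2 ^ n"
  proof -
    have "0 \<le> (\<Sum>A\<in>Pow (alts m). ballot_prob m (pp k) A * hh k A)"
      by (intro sum_nonneg mult_nonneg_nonneg) (auto simp: ballot_nonneg hh_def)
    then show ?thesis using key_sum[OF assms]
      by (intro divide_right_mono power_mono) auto
  qed
  also have "\<dots> = ((3/2) / 2) ^ n" by (rule power_divide[symmetric])
  also have "\<dots> = (3/4) ^ n" by simp
  finally show ?thesis .
qed



lemma complement_bound:
  assumes km: "k < m" "3 \<le> k" and E: "\<And>P. P \<in> profiles m n \<Longrightarrow> k * Zc k n P < n \<Longrightarrow> E P"
  shows "1 - prof_prob m (pp k) n E \<le> exp (- ln (4/3) * real n)"
proof -
  let ?w = "\<lambda>P. \<Prod>j<n. ballot_prob m (pp k) (P j)"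
  have fin: "finite (profiles m n)" by (rule finite_profiles)
  have split: "profiles m n = {P\<in>profiles m n. E P} \<union> {P\<in>profiles m n. \<not> E P}" by auto
  have "1 = (\<Sum>P\<in>profiles m n. ?w P)" by (simp add: total_one)
  also have "\<dots> = (\<Sum>P\<in>{P\<in>profiles m n. E P}. ?w P) + (\<Sum>P\<in>{P\<in>profiles m n. \<not> E P}. ?w P)"
    by (subst split, rule sum.union_disjoint) (use fin in auto)
  finally have "1 - prof_prob m (pp k) n E = (\<Sum>P\<in>{P\<in>profiles m n. \<not> E P}. ?w P)"
    by (simp add: prof_prob_def)
  also have "\<dots> \<le> (\<Sum>P\<in>{P\<in>profiles m n. n \<le> k * Zc k n P}. ?w P)"
  proof (rule sum_mono2)
    show "finite {P\<in>profiles m n. n \<le> k * Zc k n P}" using fin by simp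
    show "{P\<in>profiles m n. \<not> E P} \<subseteq> {P\<in>profiles m n. n \<le> k * Zc k n P}"
      using E by (auto simp: not_less[symmetric])
  qed (simp add: weight_nonneg)
  also have "\<dots> = prof_prob m (pp k) n (\<lambda>P. n \<le> k * Zc k n P)" by (simp add: prof_prob_def)
  also have "\<dots> \<le> (3/4) ^ n" using km by (intro tail) auto
  also have "\<dots> = exp (- ln (4/3) * real n)"
  proof -
    have "ln (3/4::real) = - ln (4/3)" by (simp add: ln_div)
    then have "exp (- ln (4/3) * real n) = exp (ln (3/4::real)) ^ n"
      by (metis exp_of_nat_mult mult.commute)
    then show ?thesis by simp
  qed
  finally show ?thesis .
qed

theorem proposition2:
  fixes m k :: nat
  assumes "m \<ge> 4" and "k \<ge> 3" and "k < m"
  shows "\<exists>p :: nat \<Rightarrow> real. (\<forall>i<m. 0 < p i \<and> p i < 1) \<and>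
    (\<exists>c>0. \<exists>N. \<forall>n\<ge>N.
       1 - prof_prob m p n (\<lambda>P. card (subset_test (JR m n k) (CORE m n k) P) = 0)
         \<le> exp (- c * real n)) \<and>
    (\<exists>c>0. \<exists>N. \<forall>n\<ge>N.
       1 - prof_prob m p n (\<lambda>P. card (eq_test (JR m n k) (CORE m n k) P) = 0)
         \<le> exp (- c * real n))"
proof (intro exI[of _ "pp k"] conjI allI impI)
  fix i show "0 < pp k i" "pp k i < 1" using pp_bounds by auto
next
  have c: "0 < ln (4/3::real)" by simp
  have notsub: "\<not> JR m n k P \<subseteq> CORE m n k P"
    if "P \<in> profiles m n" "k * Zc k n P < n" for n P
    using det[OF assms(2,3) that] by blast
  show "\<exists>c>0. \<exists>N. \<forall>n\<ge>N.
       1 - prof_prob m (pp k) n (\<lambda>P. card (subset_test (JR m n k) (CORE m n k) P) = 0)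
         \<le> exp (- c * real n)"
    using c notsub assms
    by (intro exI[of _ "ln (4/3)"] conjI exI[of _ 0] allI impI complement_bound)
       (auto simp: subset_test_def)
  show "\<exists>c>0. \<exists>N. \<forall>n\<ge>N.
       1 - prof_prob m (pp k) n (\<lambda>P. card (eq_test (JR m n k) (CORE m n k) P) = 0)
         \<le> exp (- c * real n)"
    using c notsub assms
    by (intro exI[of _ "ln (4/3)"] conjI exI[of _ 0] allI impI complement_bound)
       (auto simp: eq_test_def)
qed


end
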